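(* The simplicial complex $\Sigma_D^q$ is shellable.
   Context: $D$ is a finite directed multigraph without loops on vertex set $V$ with arc set $\mathbb E$ (arc $e$ has head $e_+$, tail $e_-$), and $q\in V$ is such that every vertex is reachable from $q$ by a directed path. $S=k[y_e:e\in\mathbb E]$ over a field $k$. $\mathcal C_D^q\subseteq S$ is generated by $\prod_{e\in\mathbb E:\,e_+\in A,\,e_-\notin A}y_e$ for all nonempty $A\subseteq V\setminus\{q\}$, and $\Sigma_D^q$ is the simplicial complex on the vertex set $\{y_e:e\in\mathbb E\}$ whose Stanley–Reisner ideal is $\mathcal C_D^q$. *)

theory Defs
  imports Main
begin

definition loopless_multidigraph ::
  "'v set \<Rightarrow> 'e set \<Rightarrow> ('e \<Rightarrow> 'v) \<Rightarrow> ('e \<Rightarrow> 'v) \<Rightarrow> bool" where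
  "loopless_multidigraph V E hd_of tl_of \<longleftrightarrow>
     finite V \<and> finite E \<and>
     (\<forall>e\<in>E. hd_of e \<in> V \<and> tl_of e \<in> V \<and> hd_of e \<noteq> tl_of e)"

definition arc_rel :: "'e set \<Rightarrow> ('e \<Rightarrow> 'v) \<Rightarrow> ('e \<Rightarrow> 'v) \<Rightarrow> ('v \<times> 'v) set" where
  "arc_rel E hd_of tl_of = {(tl_of e, hd_of e) | e. e \<in> E}"

definition reachable :: "'e set \<Rightarrow> ('e \<Rightarrow> 'v) \<Rightarrow> ('e \<Rightarrow> 'v) \<Rightarrow> 'v \<Rightarrow> 'v \<Rightarrow> bool" where
  "reachable E hd_of tl_of u w \<longleftrightarrow> (u, w) \<in> (arc_rel E hd_of tl_of)\<^sup>*"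

text \<open>Support of the generator of the cut ideal for A: arcs entering A.\<close>
definition in_cut :: "'e set \<Rightarrow> ('e \<Rightarrow> 'v) \<Rightarrow> ('e \<Rightarrow> 'v) \<Rightarrow> 'v set \<Rightarrow> 'e set" where
  "in_cut E hd_of tl_of A = {e \<in> E. hd_of e \<in> A \<and> tl_of e \<notin> A}"

text \<open>The Stanley--Reisner complex of the squarefree monomial ideal C_D^q
  (generated by the squarefree monomials with supports in_cut A, for nonempty
  A \<subseteq> V - {q}): a set F of variables is a face iff the squarefree monomial
  prod_{e in F} y_e is not in the ideal, i.e. iff no generator divides it,
  i.e. iff no generator support is contained in F.\<close>
definition Sigma_Dq :: "'v set \<Rightarrow> 'e set \<Rightarrow> ('e \<Rightarrow> 'v) \<Rightarrow> ('e \<Rightarrow> 'v) \<Rightarrow> 'v \<Rightarrow> 'e set set" where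
  "Sigma_Dq V E hd_of tl_of q =
     {F. F \<subseteq> E \<and>
         (\<forall>A. A \<noteq> {} \<and> A \<subseteq> V - {q} \<longrightarrow> \<not> in_cut E hd_of tl_of A \<subseteq> F)}"

definition simplicial_complex :: "'a set set \<Rightarrow> bool" where
  "simplicial_complex K \<longleftrightarrow> finite K \<and> (\<forall>F\<in>K. finite F) \<and>
     (\<forall>F\<in>K. \<forall>G. G \<subseteq> F \<longrightarrow> G \<in> K)"

definition facets :: "'a set set \<Rightarrow> 'a set set" where
  "facets K = {F \<in> K. \<forall>G\<in>K. F \<subseteq> G \<longrightarrow> G = F}"

text \<open>A shelling is a linear order F_0,...,F_{m-1} of all facets such that for
  every j and every i < j there are k < j and x \<in> F_j - F_i with
  F_j - F_k = {x}.  (Equivalent to: for j \<ge> 1, the complex generated by F_j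
  intersected with the complex generated by F_0..F_{j-1} is pure of
  dimension dim F_j - 1.)\<close>
definition shellable :: "'a set set \<Rightarrow> bool" where
  "shellable K \<longleftrightarrow>
     (\<exists>Fs. distinct Fs \<and> set Fs = facets K \<and>
        (\<forall>j < length Fs. \<forall>i < j. \<exists>k < j. \<exists>x \<in> Fs ! j - Fs ! i.
            Fs ! j - Fs ! k = {x}))"

end

theory Submission imports Defs "HOL-Library.List_Lexorder" "HOL-Library.Product_Lexorder" begin

lemma shell_key:
  fixes S :: "'a set set" and key :: "'a set \<Rightarrow> 'k::linorder"
  assumes fin: "finite S" and inj: "inj_on key S"
    and P: "\<And>A B. A \<in> S \<Longrightarrow> B \<in> S \<Longrightarrow> key A < key B \<Longrightarrow>
              (\<exists>C\<in>S. key C < key B \<and> (\<exists>x\<in>B - A. B - C = {x}))"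
  shows "\<exists>Fs. distinct Fs \<and> set Fs = S \<and>
        (\<forall>j < length Fs. \<forall>i < j. \<exists>k < j. \<exists>x \<in> Fs ! j - Fs ! i. Fs ! j - Fs ! k = {x})"
proof -
  define ks where "ks = sorted_list_of_set (key ` S)"
  define g where "g = the_inv_into S key"
  define Fs where "Fs = map g ks"
  have sks: "sorted_wrt (<) ks" unfolding ks_def by simp
  have setks: "set ks = key ` S" unfolding ks_def using fin by simp
  have dks: "distinct ks" unfolding ks_def by simp
  have gk: "\<And>y. y \<in> key ` S \<Longrightarrow> g y \<in> S \<and> key (g y) = y"
    unfolding g_def using inj by (auto simp: the_inv_into_f_f)
  have injg: "inj_on g (key ` S)" unfolding g_def using inj by (rule inj_on_the_inv_into)
  have d: "distinct Fs" unfolding Fs_def using dks injg setks by (simp add: distinct_map)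
  have s: "set Fs = S" unfolding Fs_def g_def using setks inj
    by (simp add: the_inv_into_onto)
  have len: "length Fs = length ks" unfolding Fs_def by simp
  have keyF: "\<And>i. i < length ks \<Longrightarrow> key (Fs ! i) = ks ! i \<and> Fs ! i \<in> S"
    unfolding Fs_def using gk setks by (metis nth_map nth_mem)
  have "\<forall>j < length Fs. \<forall>i < j. \<exists>k < j. \<exists>x \<in> Fs ! j - Fs ! i. Fs ! j - Fs ! k = {x}"
  proof (intro allI impI)
    fix j i assume j: "j < length Fs" and ij: "i < j"
    have lt: "key (Fs ! i) < key (Fs ! j)" using keyF[of i] keyF[of j] j ij len sks
      by (simp add: sorted_wrt_nth_less)
    from P[OF _ _ lt] keyF[of i] keyF[of j] j ij len obtain C x where
      C: "C \<in> S" "key C < key (Fs ! j)" "x \<in> Fs ! j - Fs ! i" "Fs ! j - C = {x}" by auto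
    from C(1) s obtain k where k: "k < length Fs" "C = Fs ! k" by (metis in_set_conv_nth)
    have "k < j"
    proof (rule ccontr)
      assume "\<not> k < j"
      hence "j \<le> k" by simp
      hence "ks ! j \<le> ks ! k" using k len sks
        by (metis le_less order.refl sorted_wrt_nth_less)
      thus False using C(2) keyF[of j] keyF[of k] k j len by simp
    qed
    thus "\<exists>k < j. \<exists>x \<in> Fs ! j - Fs ! i. Fs ! j - Fs ! k = {x}" using C k by blast
  qed
  thus ?thesis using d s by blast
qed


locale dg =
  fixes V :: "'v set" and E :: "'e set" and h t :: "'e \<Rightarrow> 'v" and q :: 'v
  assumes lm: "loopless_multidigraph V E h t" and qV: "q \<in> V"
begin

lemma finV: "finite V" and finE: "finite E"
  and hV: "e \<in> E \<Longrightarrow> h e \<in> V" and tV: "e \<in> E \<Longrightarrow> t e \<in> V"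
  using lm by (auto simp: loopless_multidigraph_def)

definition spans :: "'e set \<Rightarrow> bool" where
  "spans G \<longleftrightarrow> (\<forall>A. A \<noteq> {} \<and> A \<subseteq> V - {q} \<longrightarrow> (\<exists>e\<in>G. h e \<in> A \<and> t e \<notin> A))"

definition tree :: "'e set \<Rightarrow> bool" where
  "tree G \<longleftrightarrow> G \<subseteq> E \<and> spans G \<and> inj_on h G \<and> (\<forall>e\<in>G. h e \<noteq> q)"

lemma Sigma_iff: "F \<in> Sigma_Dq V E h t q \<longleftrightarrow> F \<subseteq> E \<and> spans (E - F)"
  unfolding Sigma_Dq_def spans_def in_cut_def by blast

lemma tree_minimal: "tree G \<Longrightarrow> G' \<subseteq> G \<Longrightarrow> spans G' \<Longrightarrow> G' = G"
proof (rule ccontr)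
  assume T: "tree G" and s: "G' \<subseteq> G" "spans G'" and ne: "G' \<noteq> G"
  then obtain e where e: "e \<in> G" "e \<notin> G'" by blast
  have eE: "e \<in> E" using T e unfolding tree_def by blast
  have A: "{h e} \<noteq> {} \<and> {h e} \<subseteq> V - {q}" using T e hV[OF eE] unfolding tree_def by auto
  then obtain e' where e': "e' \<in> G'" "h e' \<in> {h e}" "t e' \<notin> {h e}"
    using s(2) unfolding spans_def by blast
  have "e' = e" using T e e' s(1) unfolding tree_def inj_on_def by auto
  thus False using e e' by simp
qed

lemma minimal_tree:
  assumes GE: "G \<subseteq> E" and sG: "spans G" and mn: "\<And>G'. G' \<subseteq> G \<Longrightarrow> spans G' \<Longrightarrow> G' = G"
  shows "tree G"
proof -
  have q: "\<forall>e\<in>G. h e \<noteq> q"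
  proof
    fix e assume e: "e \<in> G"
    show "h e \<noteq> q"
    proof
      assume hq: "h e = q"
      have "spans (G - {e})" using sG hq unfolding spans_def by blast
      hence "G - {e} = G" using mn by blast
      thus False using e by blast
    qed
  qed
  have inj: "inj_on h G"
  proof (rule inj_onI, rule ccontr)
    fix e1 e2 assume e: "e1 \<in> G" "e2 \<in> G" "h e1 = h e2" "e1 \<noteq> e2"
    have n1: "\<not> spans (G - {e1})" using mn[of "G - {e1}"] e by blast
    have n2: "\<not> spans (G - {e2})" using mn[of "G - {e2}"] e by blast
    from n1 obtain A1 where A1: "A1 \<noteq> {}" "A1 \<subseteq> V - {q}"
      "\<forall>e\<in>G - {e1}. \<not> (h e \<in> A1 \<and> t e \<notin> A1)" unfolding spans_def by blast
    from n2 obtain A2 where A2: "A2 \<noteq> {}" "A2 \<subseteq> V - {q}"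
      "\<forall>e\<in>G - {e2}. \<not> (h e \<in> A2 \<and> t e \<notin> A2)" unfolding spans_def by blast
    from sG A1 obtain f1 where "f1 \<in> G" "h f1 \<in> A1" "t f1 \<notin> A1" unfolding spans_def by blast
    hence f1: "f1 = e1" using A1(3) by blast
    from sG A2 obtain f2 where "f2 \<in> G" "h f2 \<in> A2" "t f2 \<notin> A2" unfolding spans_def by blast
    hence f2: "f2 = e2" using A2(3) by blast
    have h1: "h e1 \<in> A1" "t e1 \<notin> A1" using \<open>h f1 \<in> A1\<close> \<open>t f1 \<notin> A1\<close> f1 by auto
    have h2: "h e2 \<in> A2" "t e2 \<notin> A2" using \<open>h f2 \<in> A2\<close> \<open>t f2 \<notin> A2\<close> f2 by auto
    have t2: "t e2 \<in> A1" using A1(3) e h1 by auto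
    have t1: "t e1 \<in> A2" using A2(3) e h2 by auto
    from sG obtain g where g: "g \<in> G" "h g \<in> A1 \<union> A2" "t g \<notin> A1 \<union> A2"
      using A1 A2 unfolding spans_def by (metis Un_empty Un_subset_iff)
    show False
    proof (cases "h g \<in> A1")
      case True
      hence "g = e1" using A1(3) g by blast
      thus False using t1 g by blast
    next
      case False
      hence "h g \<in> A2" using g by blast
      hence "g = e2" using A2(3) g by blast
      thus False using t2 g by blast
    qed
  qed
  show ?thesis using GE sG q inj unfolding tree_def by blast
qed

lemma facets_iff: "F \<in> facets (Sigma_Dq V E h t q) \<longleftrightarrow> F \<subseteq> E \<and> tree (E - F)"
proof
  assume F: "F \<in> facets (Sigma_Dq V E h t q)"
  hence FE: "F \<subseteq> E" and sp: "spans (E - F)" and mx: "\<And>F'. F' \<in> Sigma_Dq V E h t q \<Longrightarrow> F \<subseteq> F' \<Longrightarrow> F' = F"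
    unfolding facets_def by (auto simp: Sigma_iff)
  have "tree (E - F)"
  proof (rule minimal_tree)
    fix G' assume G': "G' \<subseteq> E - F" "spans G'"
    have "E - (E - G') = G'" using G' by blast
    hence "E - G' \<in> Sigma_Dq V E h t q" using G' by (simp add: Sigma_iff)
    moreover have "F \<subseteq> E - G'" using G' FE by blast
    ultimately have "E - G' = F" using mx by blast
    thus "G' = E - F" using G' by blast
  qed (use sp in auto)
  thus "F \<subseteq> E \<and> tree (E - F)" using FE by blast
next
  assume F: "F \<subseteq> E \<and> tree (E - F)"
  hence inS: "F \<in> Sigma_Dq V E h t q" by (auto simp: Sigma_iff tree_def)
  have "\<And>F'. F' \<in> Sigma_Dq V E h t q \<Longrightarrow> F \<subseteq> F' \<Longrightarrow> F' = F"
  proof -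
    fix F' assume F': "F' \<in> Sigma_Dq V E h t q" "F \<subseteq> F'"
    hence "E - F' = E - F" using tree_minimal[of "E - F" "E - F'"] F by (auto simp: Sigma_iff)
    thus "F' = F" using F F' by (auto simp: Sigma_iff)
  qed
  thus "F \<in> facets (Sigma_Dq V E h t q)" using inS unfolding facets_def by blast
qed

end

context dg begin

primrec lvl :: "'e set \<Rightarrow> nat \<Rightarrow> 'v set" where
  "lvl G 0 = {q}"
| "lvl G (Suc n) = lvl G n \<union> h ` {e\<in>G. t e \<in> lvl G n}"

definition dist :: "'e set \<Rightarrow> 'v \<Rightarrow> nat" where
  "dist G v = (LEAST n. v \<in> lvl G n)"

definition par :: "'e set \<Rightarrow> 'v \<Rightarrow> 'e" where
  "par G v = (THE e. e \<in> G \<and> h e = v)"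

lemma lvl_mono: "m \<le> n \<Longrightarrow> lvl G m \<subseteq> lvl G n"
proof (induction n)
  case 0 thus ?case by simp
next
  case (Suc n) thus ?case by (cases "m = Suc n") auto
qed

lemma lvl_step: "e \<in> G \<Longrightarrow> t e \<in> lvl G n \<Longrightarrow> h e \<in> lvl G (Suc n)"
  by auto

lemma dist_le: "v \<in> lvl G n \<Longrightarrow> dist G v \<le> n"
  unfolding dist_def by (rule Least_le)

lemma dist_q: "dist G q = 0"
  using dist_le[of q G 0] by simp

lemma reach: assumes "G \<subseteq> E" "spans G" "v \<in> V" shows "\<exists>n. v \<in> lvl G n"
proof (rule ccontr)
  assume nv: "\<nexists>n. v \<in> lvl G n"
  define A where "A = {w\<in>V. \<forall>n. w \<notin> lvl G n}"
  have "A \<noteq> {}" "A \<subseteq> V - {q}" using nv assms(3) unfolding A_def by (auto dest: spec[of _ 0])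
  then obtain e where e: "e \<in> G" "h e \<in> A" "t e \<notin> A" using assms(2) unfolding spans_def by blast
  have "t e \<in> V" using e assms(1) tV by blast
  then obtain n where "t e \<in> lvl G n" using e unfolding A_def by blast
  hence "h e \<in> lvl G (Suc n)" using e by auto
  thus False using e unfolding A_def by blast
qed

lemma in_dist: assumes "G \<subseteq> E" "spans G" "v \<in> V" shows "v \<in> lvl G (dist G v)"
  using reach[OF assms] unfolding dist_def by (rule LeastI_ex)

lemma tree_in: assumes "tree G" "v \<in> V" "v \<noteq> q"
  shows "par G v \<in> G" "h (par G v) = v"
proof -
  have "{v} \<noteq> {} \<and> {v} \<subseteq> V - {q}" using assms by auto
  then obtain e where e: "e \<in> G" "h e = v" using assms(1) unfolding tree_def spans_def by blast
  have "par G v = e" unfolding par_def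
    using e assms(1) unfolding tree_def inj_on_def by (intro the_equality) auto
  thus "par G v \<in> G" "h (par G v) = v" using e by auto
qed

lemma par_eq: assumes "tree G" "e \<in> G" shows "par G (h e) = e"
  unfolding par_def using assms unfolding tree_def inj_on_def by (intro the_equality) auto

lemma tree_dist: assumes T: "tree G" and e: "e \<in> G" shows "dist G (h e) = Suc (dist G (t e))"
proof -
  have GE: "G \<subseteq> E" and sp: "spans G" using T unfolding tree_def by auto
  have eE: "e \<in> E" using e GE by blast
  have tl: "t e \<in> lvl G (dist G (t e))" using in_dist[OF GE sp tV[OF eE]] .
  hence le: "dist G (h e) \<le> Suc (dist G (t e))" using e by (intro dist_le) auto
  have hl: "h e \<in> lvl G (dist G (h e))" using in_dist[OF GE sp hV[OF eE]] .
  have hq: "h e \<noteq> q" using T e unfolding tree_def by blast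
  obtain m where m: "dist G (h e) = Suc m"
    using hl hq by (cases "dist G (h e)") auto
  have nm: "h e \<notin> lvl G m"
  proof
    assume "h e \<in> lvl G m" hence "dist G (h e) \<le> m" by (rule dist_le)
    thus False using m by simp
  qed
  then obtain e' where e': "e' \<in> G" "t e' \<in> lvl G m" "h e' = h e" using hl m by auto
  have "e' = e" using T e e' unfolding tree_def inj_on_def by blast
  hence "dist G (t e) \<le> m" using e' dist_le by blast
  thus ?thesis using le m by simp
qed

lemma exchange:
  assumes T: "tree G" and x: "x \<in> E" "x \<notin> G" "h x \<noteq> q"
    and lt: "dist G (t x) < dist G (h x)"
  defines "G' \<equiv> insert x (G - {par G (h x)})"
  shows "tree G'" "\<forall>v\<in>V. dist G' v \<le> dist G v" "dist G' (h x) \<le> Suc (dist G (t x))"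
    "G' - G = {x}"
proof -
  define w where "w = h x"
  define y where "y = par G w"
  have wV: "w \<in> V" using hV[OF x(1)] w_def by simp
  have y: "y \<in> G" "h y = w" using tree_in[OF T wV] x(3) w_def y_def by auto
  have GE: "G \<subseteq> E" and sp: "spans G" and inj: "inj_on h G" and nq: "\<forall>e\<in>G. h e \<noteq> q"
    using T unfolding tree_def by auto
  have G'd: "G' = insert x (G - {y})" unfolding G'_def y_def w_def ..
  have oth: "\<And>e. e \<in> G \<Longrightarrow> e \<noteq> y \<Longrightarrow> h e \<noteq> w" using inj y unfolding inj_on_def by metis
  have G'E: "G' \<subseteq> E" using GE x G'd by auto
  have injG': "inj_on h G'"
  proof (rule inj_onI)
    fix a b assume ab: "a \<in> G'" "b \<in> G'" "h a = h b"
    show "a = b"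
    proof (cases "a = x \<or> b = x")
      case True thus ?thesis using ab oth G'd w_def by (metis Diff_iff insertE singletonI)
    next
      case False thus ?thesis using ab inj G'd by (auto simp: inj_on_def)
    qed
  qed
  have nqG': "\<forall>e\<in>G'. h e \<noteq> q" using nq x G'd by auto
  have spG': "spans G'" unfolding spans_def
  proof (intro allI impI, rule ccontr)
    fix A assume A: "A \<noteq> {} \<and> A \<subseteq> V - {q}" and no: "\<not> (\<exists>e\<in>G'. h e \<in> A \<and> t e \<notin> A)"
    have only: "\<And>e. e \<in> G \<Longrightarrow> h e \<in> A \<Longrightarrow> t e \<notin> A \<Longrightarrow> e = y"
      using no G'd by blast
    from sp A obtain e0 where "e0 \<in> G" "h e0 \<in> A" "t e0 \<notin> A" unfolding spans_def by blast
    hence "e0 = y" using only by blast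
    hence wA: "w \<in> A" using \<open>h e0 \<in> A\<close> y by simp
    have ge: "\<forall>v\<in>A. dist G w \<le> dist G v"
    proof (rule ccontr)
      assume "\<not> (\<forall>v\<in>A. dist G w \<le> dist G v)"
      then obtain n where "\<exists>v\<in>A. dist G v < dist G w \<and> dist G v = n" by (auto simp: not_le)
      then obtain v where v: "v \<in> A" "dist G v < dist G w"
        and vmin: "\<forall>v'\<in>A. dist G v' < dist G w \<longrightarrow> dist G v \<le> dist G v'"
        using ex_has_least_nat[where P="\<lambda>v. v \<in> A \<and> dist G v < dist G w" and m="dist G"]
        by blast
      have vV: "v \<in> V" "v \<noteq> q" using A v by auto
      define e where "e = par G v"
      have e: "e \<in> G" "h e = v" using tree_in[OF T vV] e_def by auto
      have de: "dist G v = Suc (dist G (t e))" using tree_dist[OF T e(1)] e by simp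
      have "t e \<notin> A" using vmin v de by fastforce
      hence "e = y" using only e v by blast
      thus False using e y v by simp
    qed
    have "t x \<notin> A" using ge lt w_def by fastforce
    thus False using no G'd wA w_def by blast
  qed
  show tr: "tree G'" unfolding tree_def using G'E spG' injG' nqG' by blast
  have main: "\<And>n. \<forall>v\<in>V. dist G v = n \<longrightarrow> v \<in> lvl G' n"
  proof -
    fix n show "\<forall>v\<in>V. dist G v = n \<longrightarrow> v \<in> lvl G' n"
    proof (induction n rule: less_induct)
      case (less n)
      show ?case
      proof (intro ballI impI)
        fix v assume vV: "v \<in> V" and dv: "dist G v = n"
        show "v \<in> lvl G' n"
        proof (cases "v = q")
          case True thus ?thesis using lvl_mono[of 0 n G'] by auto
        next
          case False
          define e where "e = par G v"
          have e: "e \<in> G" "h e = v" using tree_in[OF T vV False] e_def by auto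
          have de: "dist G v = Suc (dist G (t e))" using tree_dist[OF T e(1)] e by simp
          then obtain m where m: "n = Suc m" "dist G (t e) = m" using dv by auto
          show ?thesis
          proof (cases "v = w")
            case False
            hence "e \<noteq> y" using e y by auto
            hence eG': "e \<in> G'" using G'd e by auto
            have "t e \<in> lvl G' m" using less.IH[of m] m tV[of e] e GE by auto
            thus ?thesis using m eG' e by auto
          next
            case True
            have tx: "t x \<in> V" using tV[OF x(1)] .
            have "dist G (t x) < n" using lt True dv w_def by simp
            hence "t x \<in> lvl G' (dist G (t x))" using less.IH tx by blast
            moreover have "dist G (t x) \<le> m" using \<open>dist G (t x) < n\<close> m by simp
            ultimately have "t x \<in> lvl G' m" using lvl_mono by blast
            thus ?thesis using m G'd True w_def by auto
          qed
        qed
      qed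
    qed
  qed
  show "\<forall>v\<in>V. dist G' v \<le> dist G v" using main dist_le by blast
  have "t x \<in> lvl G' (dist G (t x))" using main tV[OF x(1)] by blast
  hence "h x \<in> lvl G' (Suc (dist G (t x)))" using G'd by auto
  thus "dist G' (h x) \<le> Suc (dist G (t x))" by (rule dist_le)
  show "G' - G = {x}" using G'd x by auto
qed

end

locale dg2 = dg V E h t q for V :: "'v set" and E :: "'e set" and h t q +
  fixes vs :: "'v list" and idx :: "'e \<Rightarrow> nat"
  assumes vsd: "distinct vs" and vss: "set vs = V - {q}" and idx: "inj_on idx E"
begin

definition Phi :: "'e set \<Rightarrow> nat" where "Phi G = (\<Sum>v\<in>V. dist G v)"
definition vec :: "'e set \<Rightarrow> nat list" where "vec G = map (\<lambda>v. idx (par G v)) vs"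
definition key :: "'e set \<Rightarrow> nat \<times> nat list" where "key G = (Phi G, vec G)"

lemma vec_inj: assumes T1: "tree G1" and T2: "tree G2" and eq: "vec G1 = vec G2"
  shows "G1 = G2"
proof -
  have pe: "\<And>v. v \<in> V - {q} \<Longrightarrow> par G1 v = par G2 v"
  proof -
    fix v assume v: "v \<in> V - {q}"
    then obtain p where p: "p < length vs" "vs ! p = v" using vss by (metis in_set_conv_nth)
    have "idx (par G1 v) = idx (par G2 v)" using eq p unfolding vec_def
      by (metis nth_map)
    moreover have "par G1 v \<in> E" "par G2 v \<in> E" using tree_in(1)[OF T1] tree_in(1)[OF T2] v T1 T2
      unfolding tree_def by auto
    ultimately show "par G1 v = par G2 v" using idx unfolding inj_on_def by blast
  qed
  have sub: "\<And>Ga Gb. tree Ga \<Longrightarrow> tree Gb \<Longrightarrow> (\<And>v. v \<in> V - {q} \<Longrightarrow> par Ga v = par Gb v) \<Longrightarrow> Ga \<subseteq> Gb"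
  proof
    fix Ga Gb e assume Ta: "tree Ga" and Tb: "tree Gb" and pp: "\<And>v. v \<in> V - {q} \<Longrightarrow> par Ga v = par Gb v"
      and e: "e \<in> Ga"
    have hv: "h e \<in> V - {q}" using Ta e hV unfolding tree_def by auto
    have "e = par Ga (h e)" using par_eq[OF Ta e] by simp
    also have "\<dots> = par Gb (h e)" using pp hv by blast
    finally show "e \<in> Gb" using tree_in(1)[OF Tb] hv by (metis DiffE singletonI)
  qed
  show ?thesis using sub[OF T1 T2 pe] sub[OF T2 T1] pe by (metis subset_antisym)
qed

lemma list_upd_less: assumes "p < length xs" "a < xs ! p" shows "xs[p := a] < xs"
proof -
  have "xs = take p xs @ xs ! p # drop (Suc p) xs" using assms(1) by (simp add: id_take_nth_drop)
  moreover have "xs[p := a] = take p xs @ a # drop (Suc p) xs" using assms(1) by (rule upd_conv_take_nth_drop)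
  ultimately show ?thesis unfolding list_less_def lexord_def using assms(2) by auto (metis)
qed

lemma list_less_nth: assumes "(xs::nat list) < ys" "length xs = length ys"
  shows "\<exists>p < length xs. xs ! p < ys ! p"
proof -
  from assms(1) have "(xs, ys) \<in> lexord {(u, v). u < v}" unfolding list_less_def .
  then obtain a v u b w where
    c: "ys = xs @ a # v \<or> (a < b \<and> xs = u @ a # v \<and> ys = u @ b # w)"
    unfolding lexord_def by blast
  show ?thesis
  proof (cases "ys = xs @ a # v")
    case True thus ?thesis using assms(2) by simp
  next
    case False
    hence "a < b" "xs = u @ a # v" "ys = u @ b # w" using c by auto
    thus ?thesis by (intro exI[of _ "length u"]) (auto simp: nth_append)
  qed
qed

lemma pair:
  assumes Ti: "tree Gi" and Tj: "tree Gj" and lt: "key Gi < key Gj"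
  shows "\<exists>x \<in> Gi - Gj. \<exists>G'. tree G' \<and> key G' < key Gj \<and> G' - Gj = {x}"
proof (cases "\<exists>v\<in>V. dist Gi v < dist Gj v")
  case True
  then obtain w where w: "w \<in> V" "dist Gi w < dist Gj w"
    and wmin: "\<forall>v. v \<in> V \<and> dist Gi v < dist Gj v \<longrightarrow> dist Gi w \<le> dist Gi v"
    using ex_has_least_nat[where P="\<lambda>v. v \<in> V \<and> dist Gi v < dist Gj v" and m="dist Gi"] by blast
  have wq: "w \<noteq> q" using w dist_q by (metis less_nat_zero_code)
  define x where "x = par Gi w"
  have x: "x \<in> Gi" "h x = w" using tree_in[OF Ti w(1) wq] x_def by auto
  have xE: "x \<in> E" using x Ti unfolding tree_def by auto
  have di: "dist Gi w = Suc (dist Gi (t x))" using tree_dist[OF Ti x(1)] x by simp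
  have tx: "t x \<in> V" using tV[OF xE] .
  have uj: "dist Gj (t x) \<le> dist Gi (t x)" using wmin tx di by (metis Suc_n_not_le_n not_le)
  have xnot: "x \<notin> Gj"
  proof
    assume "x \<in> Gj" hence "dist Gj w = Suc (dist Gj (t x))" using tree_dist[OF Tj] x by metis
    thus False using uj di w by simp
  qed
  have ltx: "dist Gj (t x) < dist Gj (h x)" using uj di w x by simp
  define G' where "G' = insert x (Gj - {par Gj (h x)})"
  note ex = exchange[OF Tj xE xnot _ ltx, folded G'_def]
  have hxq: "h x \<noteq> q" using x wq by simp
  have le: "\<forall>v\<in>V. dist G' v \<le> dist Gj v" using ex(2)[OF hxq] .
  have "dist G' w < dist Gj w" using ex(3)[OF hxq] x uj di w by simp
  hence "Phi G' < Phi Gj" unfolding Phi_def using le w finV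
    by (intro sum_strict_mono_ex1) auto
  hence "key G' < key Gj" unfolding key_def by simp
  thus ?thesis using ex(1)[OF hxq] ex(4)[OF hxq] x xnot by blast
next
  case False
  hence ge: "\<forall>v\<in>V. dist Gj v \<le> dist Gi v" by (auto simp: not_less)
  have PhiLe: "Phi Gi \<le> Phi Gj" using lt unfolding key_def by (auto simp: less_prod_def)
  have eqd: "\<forall>v\<in>V. dist Gi v = dist Gj v"
  proof (rule ccontr)
    assume "\<not> (\<forall>v\<in>V. dist Gi v = dist Gj v)"
    then obtain v where "v \<in> V" "dist Gj v < dist Gi v" using ge by (metis le_neq_implies_less)
    hence "Phi Gj < Phi Gi" unfolding Phi_def using ge finV by (intro sum_strict_mono_ex1) auto
    thus False using PhiLe by simp
  qed
  hence "Phi Gi = Phi Gj" unfolding Phi_def by (intro sum.cong) auto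
  hence vlt: "vec Gi < vec Gj" using lt unfolding key_def by (auto simp: less_prod_def)
  obtain p where p: "p < length vs" "vec Gi ! p < vec Gj ! p"
    using list_less_nth[OF vlt] unfolding vec_def by auto
  define v where "v = vs ! p"
  have v: "v \<in> V" "v \<noteq> q" using p(1) vss v_def nth_mem by fastforce+
  define x where "x = par Gi v"
  define y where "y = par Gj v"
  have x: "x \<in> Gi" "h x = v" using tree_in[OF Ti v] x_def by auto
  have y: "y \<in> Gj" "h y = v" using tree_in[OF Tj v] y_def by auto
  have xE: "x \<in> E" using x Ti unfolding tree_def by auto
  have ixy: "idx x < idx y" using p unfolding vec_def x_def y_def v_def by simp
  have xnot: "x \<notin> Gj"
  proof
    assume "x \<in> Gj" hence "x = y" using par_eq[OF Tj] x y_def by metis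
    thus False using ixy by simp
  qed
  have tx: "t x \<in> V" using tV[OF xE] .
  have ltx: "dist Gj (t x) < dist Gj (h x)"
    using tree_dist[OF Ti x(1)] eqd tx v x by simp
  define G' where "G' = insert x (Gj - {par Gj (h x)})"
  have hxq: "h x \<noteq> q" using x v by simp
  note ex = exchange[OF Tj xE xnot hxq ltx, folded G'_def]
  have T': "tree G'" using ex(1) .
  have "Phi G' \<le> Phi Gj" unfolding Phi_def using ex(2) by (intro sum_mono) auto
  moreover have "vec G' = (vec Gj)[p := idx x]"
  proof (rule nth_equalityI)
    show "length (vec G') = length ((vec Gj)[p := idx x])" unfolding vec_def by simp
    fix i assume i: "i < length (vec G')"
    hence i': "i < length vs" unfolding vec_def by simp
    show "vec G' ! i = (vec Gj)[p := idx x] ! i"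
    proof (cases "i = p")
      case True
      have "par G' v = x" using par_eq[OF T'] x unfolding G'_def by auto
      thus ?thesis using True i' p unfolding vec_def v_def by simp
    next
      case False
      have ui: "vs ! i \<noteq> v" using False vsd i' p(1) v_def nth_eq_iff_index_eq by metis
      have ui2: "vs ! i \<in> V - {q}" using i' vss nth_mem by fastforce
      have e: "par Gj (vs ! i) \<in> Gj" "h (par Gj (vs ! i)) = vs ! i" using tree_in[OF Tj] ui2 by auto
      have "par Gj (vs ! i) \<in> G'" using e ui y x unfolding G'_def y_def by auto
      hence "par G' (vs ! i) = par Gj (vs ! i)" using par_eq[OF T'] e by metis
      thus ?thesis using False i' unfolding vec_def by simp
    qed
  qed
  hence "vec G' < vec Gj" using list_upd_less[of p "vec Gj" "idx x"] p ixy
    unfolding vec_def y_def v_def x_def by simp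
  ultimately have "key G' < key Gj" unfolding key_def by (auto simp: less_prod_def)
  thus ?thesis using T' ex(4) x xnot by blast
qed

end

theorem mainTheorem6:
  fixes V :: "'v set" and E :: "'e set" and hd_of tl_of :: "'e \<Rightarrow> 'v" and q :: 'v
  assumes "loopless_multidigraph V E hd_of tl_of"
    and "q \<in> V"
    and "\<forall>v\<in>V. reachable E hd_of tl_of q v"
  shows "shellable (Sigma_Dq V E hd_of tl_of q)"
proof -
  interpret dg V E hd_of tl_of q using assms(1,2) by unfold_locales
  obtain vs where vs: "distinct vs" "set vs = V - {q}"
    using finite_distinct_list[of "V - {q}"] finV by blast
  obtain idx :: "'e \<Rightarrow> nat" and n where idx: "inj_on idx E"
    using finite_imp_inj_to_nat_seg[OF finE] by blast
  interpret d2: dg2 V E hd_of tl_of q vs idx using vs idx by unfold_locales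
  let ?S = "facets (Sigma_Dq V E hd_of tl_of q)"
  have fin: "finite ?S"
    by (rule finite_subset[of _ "Pow E"]) (auto simp: facets_iff finE)
  have inj: "inj_on (\<lambda>F. d2.key (E - F)) ?S"
  proof (rule inj_onI)
    fix A B assume AB: "A \<in> ?S" "B \<in> ?S" "d2.key (E - A) = d2.key (E - B)"
    hence "E - A = E - B" using d2.vec_inj[of "E - A" "E - B"] unfolding d2.key_def
      by (auto simp: facets_iff)
    thus "A = B" using AB by (auto simp: facets_iff)
  qed
  have "\<exists>Fs. distinct Fs \<and> set Fs = ?S \<and>
        (\<forall>j < length Fs. \<forall>i < j. \<exists>k < j. \<exists>x \<in> Fs ! j - Fs ! i. Fs ! j - Fs ! k = {x})"
  proof (rule shell_key[OF fin inj])
    fix A B assume A: "A \<in> ?S" and B: "B \<in> ?S" and lt: "d2.key (E - A) < d2.key (E - B)"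
    have Ti: "tree (E - A)" and Tj: "tree (E - B)" and AE: "A \<subseteq> E" and BE: "B \<subseteq> E"
      using A B by (auto simp: facets_iff)
    obtain x G' where x: "x \<in> (E - A) - (E - B)" and T': "tree G'"
      and k: "d2.key G' < d2.key (E - B)" and d: "G' - (E - B) = {x}"
      using d2.pair[OF Ti Tj lt] by blast
    have G'E: "G' \<subseteq> E" using T' unfolding tree_def by blast
    have C: "E - G' \<in> ?S" using T' G'E by (auto simp: facets_iff Diff_Diff_Int Int_absorb1)
    have "E - (E - G') = G'" using G'E by blast
    hence k': "d2.key (E - (E - G')) < d2.key (E - B)" using k by simp
    have "x \<in> B - A" using x by blast
    moreover have "B - (E - G') = {x}" using d G'E BE by blast
    ultimately show "\<exists>C\<in>?S. d2.key (E - C) < d2.key (E - B) \<and> (\<exists>x\<in>B - A. B - C = {x})"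
      using C k' by blast
  qed
  thus ?thesis unfolding shellable_def by blast
qed

end
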